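(* Let $(y_i',x_i')'$, $1\le i\le n$, be an i.i.d. sample from the multivariate linear model $y_i=B_0'x_i+u_i$ with random $x_i\in\mathbb{R}^p$, errors $u_i\in\mathbb{R}^q$ independent of $x_i$ with distribution $F_0$ and scatter matrix $\Sigma_0\in\mathcal{S}_q$, and write $\Sigma_0=|\Sigma_0|^{1/q}\Gamma_0$. Let $\rho_0$ be a $\rho$-function. Assume the initial estimates satisfy $\tilde B_n\to B_0$ and $\tilde\Sigma_n\to\Gamma_0$ almost surely. Then $\hat\sigma_n=s\big(d_1(\tilde B_n,\tilde\Sigma_n),\dots,d_n(\tilde B_n,\tilde\Sigma_n)\big)$ converges almost surely to $\sigma_0$, defined by $E_{F_0}\rho_0\big((u'\Gamma_0^{-1}u)^{1/2}/\sigma_0\big)=0.5$.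
   Context: $\mathcal{S}_q$ is the set of positive definite symmetric $q\times q$ matrices, $|\cdot|$ the determinant. A $\rho$-function is a continuous nondecreasing function of $|u|$ with $\rho(0)=0$, $\sup\rho=1$, strictly increasing on nonnegative $u$ with $\rho(u)<1$. $d_i(B,\Sigma)=((y_i-B'x_i)'\Sigma^{-1}(y_i-B'x_i))^{1/2}$. The M-scale $s(v)$ of $v=(v_1,\dots,v_n)$ solves $\frac1n\sum_i\rho_0(v_i/s)=0.5$ (or $s=0$ if at least half the $v_i$ are zero). *)

theory Defs
  imports "HOL-Probability.Probability"
begin

definition pd_sym :: "real^'q^'q \<Rightarrow> bool" where
  "pd_sym S \<longleftrightarrow> transpose S = S \<and> (\<forall>v. v \<noteq> 0 \<longrightarrow> v \<bullet> (S *v v) > 0)"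

definition rho_function :: "(real \<Rightarrow> real) \<Rightarrow> bool" where
  "rho_function \<rho> \<longleftrightarrow>
     continuous_on UNIV \<rho> \<and>
     (\<forall>u. \<rho> u = \<rho> \<bar>u\<bar>) \<and>
     mono_on {0..} \<rho> \<and>
     \<rho> 0 = 0 \<and>
     bdd_above (range \<rho>) \<and> (SUP u. \<rho> u) = 1 \<and>
     (\<forall>u v. 0 \<le> u \<and> u < v \<and> \<rho> u < 1 \<longrightarrow> \<rho> u < \<rho> v)"

definition mdist :: "real^'q^'p \<Rightarrow> real^'q^'q \<Rightarrow> real^'q \<Rightarrow> real^'p \<Rightarrow> real" where
  "mdist B \<Sigma> y x = sqrt ((y - transpose B *v x) \<bullet> (matrix_inv \<Sigma> *v (y - transpose B *v x)))"

definition mscale :: "(real \<Rightarrow> real) \<Rightarrow> nat \<Rightarrow> (nat \<Rightarrow> real) \<Rightarrow> real" where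
  "mscale \<rho> n v =
     (if real n \<le> 2 * real (card {i\<in>{..<n}. v i = 0}) then 0
      else (THE s. s > 0 \<and> (1 / real n) * (\<Sum>i<n. \<rho> (v i / s)) = 1/2))"

end

theory Submission
  imports Defs
begin



lemma slln01:
  fixes Z :: "nat \<Rightarrow> 'a \<Rightarrow> real"
  assumes P: "prob_space M"
    and ind: "prob_space.indep_vars M (\<lambda>_. borel) Z UNIV"
    and dist: "\<And>i. distr M borel (Z i) = distr M borel (Z 0)"
    and bnd: "\<And>i x. x \<in> space M \<Longrightarrow> Z i x \<in> {0..1}"
  shows "AE x in M. (\<lambda>n. (\<Sum>i<n. Z i x) / real n) \<longlonglongrightarrow> prob_space.expectation M (Z 0)"
proof -
  interpret prob_space M by fact
  have rv[measurable]: "\<And>i. Z i \<in> borel_measurable M" using ind unfolding indep_vars_def by blast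
  define \<mu> where "\<mu> = expectation (Z 0)"
  have key: "AE x in M. eventually (\<lambda>n. \<bar>(\<Sum>i<n. Z i x)/n - \<mu>\<bar> < e) sequentially" if e: "e > 0" for e
  proof -
    define A where "A n = {x\<in>space M. \<bar>(\<Sum>i\<in>{..<Suc n}. Z i x)/real (card {..<Suc n}) - \<mu>\<bar> \<ge> e}" for n
    have meas[measurable]: "A n \<in> sets M" for n  unfolding A_def by measurable
    have bound: "measure M (A n) \<le> 2 * exp (-2 * e^2) * (exp (-2 * e^2)) ^ n" for n
    proof -
      interpret H: Hoeffding_ineq_iid M "{..<Suc n}" Z "Z 0" 0 1 \<mu>
        apply unfold_locales
        using indep_vars_subset[OF ind] dist bnd by (auto simp: \<mu>_def)
      have "measure M (A n) \<le>  2 * exp (-2 * real (card {..<Suc n}) * e\<^sup>2 / (1 - 0)\<^sup>2)"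
        using H.Hoeffding_ineq_abs_ge'[OF less_imp_le[OF e] zero_less_one] unfolding A_def by auto
      also have "\<dots> = 2 * exp (-2 * e^2) * (exp (-2 * e^2)) ^ n"
        by (simp add: exp_of_nat_mult[symmetric] exp_add[symmetric] algebra_simps)
      finally show ?thesis .
    qed
    have "summable (\<lambda>n. 2 * exp (-2 * e^2) * (exp (-2 * e^2)) ^ n)"
      using e by (intro summable_mult summable_geometric) auto
    then have "summable (\<lambda>n. measure M (A n))"
      by (rule summable_comparison_test[rotated]) (use bound in auto)
    then have "AE x in M. eventually (\<lambda>n. x \<in> space M - A n) sequentially"
      by (intro borel_cantelli_AE1) (auto simp: emeasure_eq_measure)
    then show ?thesis
    proof (rule AE_mp, intro AE_I2 impI)
      fix x assume x: "x \<in> space M" and ev: "eventually (\<lambda>n. x \<in> space M - A n) sequentially"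
      have "eventually (\<lambda>n. \<bar>(\<Sum>i<Suc n. Z i x)/real (Suc n) - \<mu>\<bar> < e) sequentially"
        using ev by eventually_elim (use x in \<open>auto simp: A_def\<close>)
      then show "eventually (\<lambda>n. \<bar>(\<Sum>i<n. Z i x)/n - \<mu>\<bar> < e) sequentially"
        by (subst eventually_sequentially_Suc[symmetric])
    qed
  qed
  have "AE x in M. \<forall>k::nat. eventually (\<lambda>n. \<bar>(\<Sum>i<n. Z i x)/n - \<mu>\<bar> < 1 / real (Suc k)) sequentially"
    unfolding AE_all_countable by (intro allI key) auto
  then show ?thesis
  proof (rule AE_mp, intro AE_I2 impI)
    fix x assume H: "\<forall>k::nat. eventually (\<lambda>n. \<bar>(\<Sum>i<n. Z i x)/n - \<mu>\<bar> < 1 / real (Suc k)) sequentially"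
    show "(\<lambda>n. (\<Sum>i<n. Z i x) / real n) \<longlonglongrightarrow> expectation (Z 0)"
      unfolding tendsto_iff \<mu>_def[symmetric]
    proof (intro allI impI)
      fix r :: real assume "r > 0"
      then obtain k where k: "inverse (real (Suc k)) < r" using reals_Archimedean by blast
      show "eventually (\<lambda>n. dist ((\<Sum>i<n. Z i x) / real n) \<mu> < r) sequentially"
      proof -
        have k': "1 / real (Suc k) < r" using k by (simp add: inverse_eq_divide)
        show ?thesis using H[rule_format, of k] by eventually_elim (use k' in \<open>auto simp: dist_real_def\<close>)
      qed
    qed
  qed
qed



lemma mv_bound_gen:
  fixes A :: "real^'n^'m"
  assumes "\<And>i j. \<bar>A$i$j\<bar> \<le> a"
  shows "norm (A *v x) \<le> real CARD('m) * real CARD('n) * a * norm x"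
proof -
  have "norm (A *v x) \<le> (\<Sum>i\<in>UNIV. \<bar>(A *v x)$i\<bar>)" by (rule norm_le_l1_cart)
  also have "\<dots> \<le> (\<Sum>i\<in>(UNIV::'m set). \<Sum>j\<in>(UNIV::'n set). a * norm x)"
  proof (rule sum_mono)
    fix i
    have "\<bar>(A *v x)$i\<bar> = \<bar>\<Sum>j\<in>UNIV. A$i$j * x$j\<bar>" by (simp add: matrix_vector_mult_def)
    also have "\<dots> \<le> (\<Sum>j\<in>UNIV. \<bar>A$i$j * x$j\<bar>)" by (rule sum_abs)
    also have "\<dots> \<le> (\<Sum>j\<in>(UNIV::'n set). a * norm x)"
      by (rule sum_mono) (simp add: abs_mult assms component_le_norm_cart mult_mono')
    finally show "\<bar>(A *v x)$i\<bar> \<le> (\<Sum>j\<in>(UNIV::'n set). a * norm x)" .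
  qed
  also have "\<dots> = real CARD('m) * real CARD('n) * a * norm x" by simp
  finally show ?thesis .
qed

lemma comp_le: "\<bar>(A::real^'n^'m)$i$j\<bar> \<le> norm A"
  using component_le_norm_cart[of "A$i" j] Finite_Cartesian_Product.norm_nth_le[of A i] by linarith

lemma mv_bound:
  fixes A :: "real^'n^'m"
  shows "norm (A *v x) \<le> real CARD('m) * real CARD('n) * norm A * norm x"
  by (rule mv_bound_gen) (rule comp_le)

lemma tmv_bound:
  fixes A :: "real^'n^'m"
  shows "norm (transpose A *v x) \<le> real CARD('n) * real CARD('m) * norm A * norm x"
  by (rule mv_bound_gen) (simp add: transpose_def comp_le)

lemma matrix_inv_works:
  fixes S :: "real^'q^'q"
  assumes "invertible S"
  shows "S ** matrix_inv S = mat 1" "matrix_inv S ** S = mat 1"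
proof -
  have "\<exists>A'. S ** A' = mat 1 \<and> A' ** S = mat 1" using assms unfolding invertible_def by blast
  from someI_ex[OF this] show "S ** matrix_inv S = mat 1" "matrix_inv S ** S = mat 1"
    unfolding matrix_inv_def by auto
qed

lemma matrix_inv_app:
  fixes S :: "real^'q^'q"
  assumes "invertible S"
  shows "S *v (matrix_inv S *v w) = w" "matrix_inv S *v (S *v w) = w"
  using matrix_inv_works[OF assms]
  by (metis matrix_vector_mul_assoc matrix_vector_mul_lid)+

definition qf :: "real^'q^'q \<Rightarrow> real^'q \<Rightarrow> real" where
  "qf M w = w \<bullet> (M *v w)"


lemma pert:
  fixes S0 :: "real^'q^'q" and B0 :: "real^'q^'p"
  assumes inv: "invertible S0" and K: "K > 0" and eta: "\<eta> > 0"
  shows "\<exists>\<delta>>0. \<forall>S B x u. norm (S - S0) < \<delta> \<longrightarrow> norm (B - B0) < \<delta> \<longrightarrow> norm (x::real^'p) \<le> K \<longrightarrow> norm (u::real^'q) \<le> K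
           \<longrightarrow> \<bar>qf (matrix_inv S) (u + transpose (B0 - B) *v x) - qf (matrix_inv S0) u\<bar> < \<eta>"
proof -
  define C where "C = real CARD('q) * real CARD('q)"
  define Cp where "Cp = real CARD('q) * real CARD('p)"
  define M0 where "M0 = matrix_inv S0"
  define a where "a = C * norm M0 + 1"
  define Z where "Z = C * norm M0 * K + 1"
  define L where "L = (K + Cp * K) * (2 * a) * (Cp * K + C * Z) + Cp * K * Z + 1"
  have cq: "real CARD('q) \<ge> 1" and cp: "real CARD('p) \<ge> 1"
    using card_gt_0_iff[of "UNIV::'q set"] card_gt_0_iff[of "UNIV::'p set"] by auto
  have C1: "C \<ge> 1" unfolding C_def using mult_mono[OF cq cq] by simp
  have Cp1: "Cp \<ge> 1" unfolding Cp_def using mult_mono[OF cq cp] by simp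
  have a1: "a \<ge> 1" unfolding a_def using C1 by simp
  have Z1: "Z \<ge> 1" unfolding Z_def using C1 K by simp
  have L1: "L \<ge> 1" unfolding L_def using K Cp1 a1 Z1 C1 by (simp add: zero_le_mult_iff)
  have lowS0: "norm v \<le> a * norm (S0 *v v)" for v
  proof -
    have "norm v = norm (M0 *v (S0 *v v))" using matrix_inv_app[OF inv] by (simp add: M0_def)
    also have "\<dots> \<le> C * norm M0 * norm (S0 *v v)" using mv_bound[of M0 "S0 *v v"] by (simp add: C_def)
    also have "\<dots> \<le> a * norm (S0 *v v)" unfolding a_def by (simp add: mult_right_mono)
    finally show ?thesis .
  qed
  define \<delta> where "\<delta> = min 1 (min (1 / (2 * a * C)) (\<eta> / L))"
  have d0: "\<delta> > 0" unfolding \<delta>_def using a1 C1 L1 eta by simp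
  have d1: "\<delta> \<le> 1" and d2: "\<delta> \<le> 1 / (2 * a * C)" and d3: "\<delta> \<le> \<eta> / L" unfolding \<delta>_def by auto
  show ?thesis
  proof (intro exI[of _ \<delta>] conjI allI impI d0)
    fix S B and x :: "real^'p" and u :: "real^'q"
    assume hS: "norm (S - S0) < \<delta>" and hB: "norm (B - B0) < \<delta>" and hx: "norm x \<le> K" and hu: "norm u \<le> K"
    have lowS: "norm v \<le> 2 * a * norm (S *v v)" for v
    proof -
      have "norm ((S - S0) *v v) \<le> C * norm (S - S0) * norm v" using mv_bound[of "S - S0" v] by (simp add: C_def)
      also have "\<dots> \<le> C * \<delta> * norm v" using hS C1 by (intro mult_right_mono mult_left_mono) auto
      also have "\<dots> \<le> C * (1 / (2 * a * C)) * norm v" using d2 C1 by (intro mult_right_mono mult_left_mono) auto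
      also have "\<dots> = norm v / (2 * a)" using C1 by (simp add: field_simps)
      finally have 1: "norm ((S - S0) *v v) \<le> norm v / (2 * a)" .
      have 2: "S0 *v v = S *v v - (S - S0) *v v" by (simp add: matrix_vector_mult_diff_rdistrib)
      have "norm v \<le> a * norm (S0 *v v)" by (rule lowS0)
      also have "\<dots> \<le> a * (norm (S *v v) + norm ((S - S0) *v v))" 
      proof (rule mult_left_mono)
        show "norm (S0 *v v) \<le> norm (S *v v) + norm ((S - S0) *v v)"
          unfolding 2 by (rule norm_triangle_ineq4)
      qed (use a1 in simp)
      also have "\<dots> \<le> a * norm (S *v v) + norm v / 2" using 1 a1 by (simp add: algebra_simps field_simps)
      finally show ?thesis by simp
    qed
    have invS: "invertible S"
    proof -
      have "\<forall>v. S *v v = 0 \<longrightarrow> v = 0" using lowS by (metis mult_zero_right norm_eq_zero norm_le_zero_iff)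
      then show ?thesis unfolding invertible_left_inverse matrix_left_invertible_ker .
    qed
    define d where "d = transpose (B0 - B) *v x"
    define w where "w = u + d"
    define z where "z = matrix_inv S *v w"
    define z0 where "z0 = M0 *v u"
    have Sz: "S *v z = w" unfolding z_def using matrix_inv_app[OF invS] by simp
    have Sz0: "S0 *v z0 = u" unfolding z0_def M0_def using matrix_inv_app[OF inv] by simp
    have nd: "norm d \<le> Cp * \<delta> * K"
    proof -
      have "norm d \<le> Cp * norm (B0 - B) * norm x" using tmv_bound[of "B0 - B" x] by (simp add: d_def Cp_def)
      also have "\<dots> \<le> Cp * \<delta> * K" using hB hx Cp1 d0 by (intro mult_mono mult_left_mono) (auto simp: norm_minus_commute)
      finally show ?thesis .
    qed
    have nz0: "norm z0 \<le> Z"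
    proof -
      have "norm z0 \<le> C * norm M0 * norm u" using mv_bound[of M0 u] by (simp add: z0_def C_def)
      also have "\<dots> \<le> C * norm M0 * K" using hu C1 by (intro mult_left_mono) auto
      finally show ?thesis unfolding Z_def by simp
    qed
    have "S *v (z - z0) = d + (S0 - S) *v z0"
      using Sz Sz0 by (simp add: matrix_vector_mult_diff_distrib matrix_vector_mult_diff_rdistrib w_def)
    then have "norm (z - z0) \<le> 2 * a * norm (d + (S0 - S) *v z0)" using lowS[of "z - z0"] by simp
    also have "\<dots> \<le> 2 * a * (Cp * \<delta> * K + C * \<delta> * Z)"
    proof -
      have "norm ((S0 - S) *v z0) \<le> C * norm (S0 - S) * norm z0" using mv_bound[of "S0 - S" z0] by (simp add: C_def)
      also have "\<dots> \<le> C * \<delta> * Z" using hS nz0 C1 d0 by (intro mult_mono mult_left_mono) (auto simp: norm_minus_commute)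
      finally have "norm (d + (S0 - S) *v z0) \<le> Cp * \<delta> * K + C * \<delta> * Z" using nd norm_triangle_ineq[of d "(S0 - S) *v z0"] by linarith
      then show ?thesis using a1 by simp
    qed
    finally have nzz: "norm (z - z0) \<le> 2 * a * \<delta> * (Cp * K + C * Z)" by (simp add: algebra_simps)
    have nw: "norm w \<le> K + Cp * K"
    proof -
      have "norm w \<le> norm u + norm d" unfolding w_def by (rule norm_triangle_ineq)
      also have "\<dots> \<le> K + Cp * 1 * K"
      proof -
        have "Cp * \<delta> * K \<le> Cp * 1 * K" using d1 Cp1 K by (intro mult_right_mono mult_left_mono) auto
        then show ?thesis using hu nd by linarith
      qed
      finally show ?thesis by simp
    qed
    have eq: "qf (matrix_inv S) w - qf M0 u = w \<bullet> (z - z0) + d \<bullet> z0"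
      unfolding qf_def z_def[symmetric] z0_def[symmetric] by (simp add: w_def inner_diff_right inner_add_left)
    have "\<bar>w \<bullet> (z - z0) + d \<bullet> z0\<bar> \<le> norm w * norm (z - z0) + norm d * norm z0"
      using Cauchy_Schwarz_ineq2[of w "z - z0"] Cauchy_Schwarz_ineq2[of d z0] abs_triangle_ineq[of "w \<bullet> (z - z0)" "d \<bullet> z0"] by linarith
    also have "\<dots> \<le> (K + Cp * K) * (2 * a * \<delta> * (Cp * K + C * Z)) + (Cp * \<delta> * K) * Z"
      using nw nzz nd nz0 K Cp1 d0 by (intro add_mono mult_mono) auto
    also have "\<dots> = \<delta> * (L - 1)" unfolding L_def by (simp add: algebra_simps)
    also have "\<dots> < \<delta> * L" using d0 by simp
    also have "\<dots> \<le> \<eta>" using d3 L1 by (simp add: field_simps)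
    finally show "\<bar>qf (matrix_inv S) (u + transpose (B0 - B) *v x) - qf (matrix_inv S0) u\<bar> < \<eta>"
      using eq unfolding w_def d_def M0_def by simp
  qed
qed



lemma sqrt_diff_le0: "0 \<le> b \<Longrightarrow> b \<le> a \<Longrightarrow> sqrt a - sqrt b \<le> sqrt (a - b)"
  using sqrt_add_le_add_sqrt[of b "a - b"] by simp

lemma sqrt_diff_le_aux:
  fixes a b :: real assumes ba: "b \<le> a"
  shows "\<bar>sqrt a - sqrt b\<bar> \<le> 2 * sqrt (a - b)"
proof -
  have s0: "0 \<le> sqrt (a - b)" using ba by simp
  have m: "sqrt b \<le> sqrt a" using ba by (rule real_sqrt_le_mono)
  then have e: "\<bar>sqrt a - sqrt b\<bar> = sqrt a - sqrt b" by simp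
  have "sqrt a - sqrt b \<le> 2 * sqrt (a - b)"
  proof (cases "0 \<le> b")
    case True
    then show ?thesis using sqrt_diff_le0[OF True ba] s0 by linarith
  next
    case False
    show ?thesis
    proof (cases "0 \<le> a")
      case True
      have 1: "sqrt a \<le> sqrt (a - b)" using False by (intro real_sqrt_le_mono) simp
      have 2: "sqrt (-b) \<le> sqrt (a - b)" using True by (intro real_sqrt_le_mono) simp
      have 3: "sqrt b = - sqrt (-b)" by (simp add: real_sqrt_minus)
      have 4: "0 \<le> sqrt a" using True by simp
      have 5: "0 \<le> sqrt (-b)" using False by simp
      have "sqrt a - sqrt b \<le> sqrt a + sqrt (-b)" using 3 by simp
      then show ?thesis using 1 2 by linarith
    next
      case a: False
      have 1: "sqrt (-b) - sqrt (-a) \<le> sqrt (-b - -a)" using a False ba by (intro sqrt_diff_le0) auto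
      have 2: "-b - -a = a - b" by simp
      have 3: "sqrt a = - sqrt (-a)" "sqrt b = - sqrt (-b)" by (simp_all add: real_sqrt_minus)
      have "sqrt a - sqrt b = sqrt (-b) - sqrt (-a)" using 3 by simp
      then show ?thesis using 1 s0 unfolding 2 by linarith
    qed
  qed
  then show ?thesis using e by linarith
qed

lemma sqrt_diff_le: "\<bar>sqrt a - sqrt b\<bar> \<le> 2 * sqrt \<bar>a - b\<bar>"
proof (cases "b \<le> a")
  case True
  then show ?thesis using sqrt_diff_le_aux[OF True] by simp
next
  case False
  then have "\<bar>sqrt b - sqrt a\<bar> \<le> 2 * sqrt (b - a)" by (intro sqrt_diff_le_aux) simp
  moreover have "\<bar>a - b\<bar> = b - a" using False by simp
  ultimately show ?thesis by (simp add: abs_minus_commute)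
qed

lemma rho_props:
  assumes "rho_function \<rho>"
  shows "\<rho> u = \<rho> \<bar>u\<bar>" "0 \<le> \<rho> u" "\<rho> u \<le> 1" "continuous_on UNIV \<rho>"
    "0 \<le> a \<Longrightarrow> a \<le> b \<Longrightarrow> \<rho> a \<le> \<rho> b"
    "0 \<le> a \<Longrightarrow> a < b \<Longrightarrow> \<rho> a < 1 \<Longrightarrow> \<rho> a < \<rho> b"
    "bdd_above (range \<rho>)" "(SUP u. \<rho> u) = 1" "\<rho> 0 = 0"
proof -
  note d = assms[unfolded rho_function_def]
  have c: "continuous_on UNIV \<rho>" using d by (elim conjE) assumption
  have ev: "\<forall>u. \<rho> u = \<rho> \<bar>u\<bar>" using d by (elim conjE) assumption
  have mo: "mono_on {0..} \<rho>" using d by (elim conjE) assumption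
  have z: "\<rho> 0 = 0" using d by (elim conjE) assumption
  have bdd: "bdd_above (range \<rho>)" using d by (elim conjE) assumption
  have sup: "(SUP u. \<rho> u) = 1" using d by (elim conjE) assumption
  have st: "\<forall>u v. 0 \<le> u \<and> u < v \<and> \<rho> u < 1 \<longrightarrow> \<rho> u < \<rho> v" using d by (elim conjE) assumption
  show 1: "\<rho> u = \<rho> \<bar>u\<bar>" using ev by blast
  show mono: "0 \<le> a \<Longrightarrow> a \<le> b \<Longrightarrow> \<rho> a \<le> \<rho> b" for a b
    using mo by (rule mono_onD) auto
  have "\<rho> 0 \<le> \<rho> \<bar>u\<bar>" by (rule mono) auto
  then show "0 \<le> \<rho> u" using 1 z by linarith
  have "\<rho> u \<le> (SUP u. \<rho> u)" using bdd by (rule cSUP_upper[rotated]) simp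
  then show "\<rho> u \<le> 1" using sup by linarith
  show "continuous_on UNIV \<rho>" by (rule c)
  show "0 \<le> a \<Longrightarrow> a < b \<Longrightarrow> \<rho> a < 1 \<Longrightarrow> \<rho> a < \<rho> b" using st by blast
  show "bdd_above (range \<rho>)" "(SUP u. \<rho> u) = 1" "\<rho> 0 = 0" by (fact bdd sup z)+
qed

lemma rho_unif:
  assumes rho: "rho_function \<rho>" and eta: "\<eta> > 0"
  shows "\<exists>\<delta>>0. \<forall>a b. \<bar>a - b\<bar> < \<delta> \<longrightarrow> \<bar>\<rho> a - \<rho> b\<bar> < \<eta>"
proof -
  note P = rho_props[OF rho]
  have bdd: "bdd_above (range \<rho>)" and sup1: "(SUP u. \<rho> u) = 1" using P(7,8) .
  have "\<exists>x\<in>UNIV. 1 - \<eta> < \<rho> x" using less_cSUP_iff[of UNIV \<rho> "1-\<eta>"] bdd sup1 eta by simp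
  then obtain u0 where u0: "1 - \<eta> < \<rho> u0" by blast
  define T where "T = \<bar>u0\<bar>"
  have T: "T \<ge> 0" "1 - \<eta> < \<rho> T" using u0 P(1)[of u0] by (auto simp: T_def)
  have "uniformly_continuous_on {-(T+1)..T+1} \<rho>"
    by (rule compact_uniformly_continuous) (auto intro: continuous_on_subset[OF P(4)])
  then obtain d where d: "d > 0" "\<And>x x'. x \<in> {-(T+1)..T+1} \<Longrightarrow> x' \<in> {-(T+1)..T+1} \<Longrightarrow> dist x' x < d \<Longrightarrow> dist (\<rho> x') (\<rho> x) < \<eta>"
    unfolding uniformly_continuous_on_def using eta by metis
  have big: "\<bar>\<rho> a - \<rho> b\<bar> < \<eta>" if "T \<le> \<bar>a\<bar>" "T \<le> \<bar>b\<bar>" for a b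
  proof -
    have "\<rho> T \<le> \<rho> a" using P(5)[of T "\<bar>a\<bar>"] P(1)[of a] that T by simp
    moreover have "\<rho> T \<le> \<rho> b" using P(5)[of T "\<bar>b\<bar>"] P(1)[of b] that T by simp
    moreover have "\<rho> a \<le> 1" "\<rho> b \<le> 1" using P(3) by auto
    ultimately show ?thesis using T by linarith
  qed
  show ?thesis
  proof (intro exI[of _ "min d 1"] conjI allI impI)
    show "min d 1 > 0" using d by simp
    fix a b assume ab: "\<bar>a - b\<bar> < min d 1"
    show "\<bar>\<rho> a - \<rho> b\<bar> < \<eta>"
    proof (cases "\<bar>a\<bar> \<le> T + 1 \<and> \<bar>b\<bar> \<le> T + 1")
      case True
      then show ?thesis using d(2)[of b a] ab by (auto simp: dist_real_def abs_le_iff)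
    next
      case False
      then show ?thesis using big[of a b] ab by (auto simp: abs_le_iff abs_less_iff)
    qed
  qed
qed



definition badf :: "nat \<Rightarrow> real^'p \<Rightarrow> real^'q \<Rightarrow> real" where
  "badf k a b = (if norm a > real k \<or> norm b > real k then 1 else 0)"

lemma det_conv:
  fixes x :: "nat \<Rightarrow> real^'p" and u :: "nat \<Rightarrow> real^'q" and Bn :: "nat \<Rightarrow> real^'q^'p"
    and Sn :: "nat \<Rightarrow> real^'q^'q" and p :: "nat \<Rightarrow> real"
  assumes inv: "invertible S0" and rho: "rho_function \<rho>" and s: "s > 0"
   and cB: "Bn \<longlonglongrightarrow> B0" and cS: "Sn \<longlonglongrightarrow> S0"
   and cA: "(\<lambda>n. (\<Sum>i<n. \<rho> (sqrt (qf (matrix_inv S0) (u i)) / s)) / real n) \<longlonglongrightarrow> g"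
   and cbad: "\<And>k. (\<lambda>n. (\<Sum>i<n. badf k (x i) (u i)) / real n) \<longlonglongrightarrow> p k"
   and p0: "p \<longlonglongrightarrow> 0"
  shows "(\<lambda>n. (\<Sum>i<n. \<rho> (sqrt (qf (matrix_inv (Sn n)) (u i + transpose (B0 - Bn n) *v x i)) / s)) / real n) \<longlonglongrightarrow> g"
proof (rule tendstoI)
  fix e :: real assume e: "e > 0"
  define \<eta> where "\<eta> = e / 4"
  have eta: "\<eta> > 0" using e by (simp add: \<eta>_def)
  obtain k where pk: "\<bar>p k\<bar> < \<eta>"
  proof -
    from tendstoD[OF p0 eta] obtain N where "\<And>n. n \<ge> N \<Longrightarrow> dist (p n) 0 < \<eta>"
      unfolding eventually_sequentially by blast
    then show ?thesis using that[of N] by auto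
  qed
  obtain \<delta>1 where d1: "\<delta>1 > 0" "\<And>a b. \<bar>a - b\<bar> < \<delta>1 \<Longrightarrow> \<bar>\<rho> a - \<rho> b\<bar> < \<eta>"
    using rho_unif[OF rho eta] by blast
  define t where "t = (\<delta>1 * s / 2)^2"
  have t: "t > 0" using d1 s by (simp add: t_def)
  obtain \<delta> where \<delta>: "\<delta> > 0" and hd: "\<And>S B xx uu. norm (S - S0) < \<delta> \<Longrightarrow> norm (B - B0) < \<delta> \<Longrightarrow>
        norm (xx::real^'p) \<le> real k + 1 \<Longrightarrow> norm (uu::real^'q) \<le> real k + 1 \<Longrightarrow>
        \<bar>qf (matrix_inv S) (uu + transpose (B0 - B) *v xx) - qf (matrix_inv S0) uu\<bar> < t"
    using pert[OF inv, of "real k + 1" t B0] t by auto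
  have ev1: "eventually (\<lambda>n. norm (Sn n - S0) < \<delta>) sequentially"
    using tendstoD[OF cS \<delta>] by (simp add: dist_norm)
  have ev2: "eventually (\<lambda>n. norm (Bn n - B0) < \<delta>) sequentially"
    using tendstoD[OF cB \<delta>] by (simp add: dist_norm)
  have ev3: "eventually (\<lambda>n. \<bar>(\<Sum>i<n. badf k (x i) (u i)) / real n - p k\<bar> < \<eta>) sequentially"
    using tendstoD[OF cbad[of k] eta] by (simp add: dist_real_def)
  have ev4: "eventually (\<lambda>n. \<bar>(\<Sum>i<n. \<rho> (sqrt (qf (matrix_inv S0) (u i)) / s)) / real n - g\<bar> < \<eta>) sequentially"
    using tendstoD[OF cA eta] by (simp add: dist_real_def)
  have ev5: "eventually (\<lambda>n. n > 0) sequentially" by (rule eventually_gt_at_top)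
  show "eventually (\<lambda>n. dist ((\<Sum>i<n. \<rho> (sqrt (qf (matrix_inv (Sn n)) (u i + transpose (B0 - Bn n) *v x i)) / s)) / real n) g < e) sequentially"
    using ev1 ev2 ev3 ev4 ev5
  proof eventually_elim
    case (elim n)
    define D where "D i = \<rho> (sqrt (qf (matrix_inv S0) (u i)) / s)" for i
    define Dn where "Dn i = \<rho> (sqrt (qf (matrix_inv (Sn n)) (u i + transpose (B0 - Bn n) *v x i)) / s)" for i
    have tm: "\<bar>Dn i - D i\<bar> \<le> badf k (x i) (u i) + \<eta>" for i
    proof (cases "norm (x i) > real k \<or> norm (u i) > real k")
      case True
      then have b1: "badf k (x i) (u i) = 1" by (simp add: badf_def)
      have "0 \<le> Dn i" "Dn i \<le> 1" "0 \<le> D i" "D i \<le> 1" using rho_props[OF rho] by (auto simp: D_def Dn_def)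
      then have "\<bar>Dn i - D i\<bar> \<le> 1" by (simp add: abs_le_iff)
      then show ?thesis using b1 eta by linarith
    next
      case False
      then have nx: "norm (x i) \<le> real k + 1" "norm (u i) \<le> real k + 1" by auto
      define q1 where "q1 = qf (matrix_inv (Sn n)) (u i + transpose (B0 - Bn n) *v x i)"
      define q0 where "q0 = qf (matrix_inv S0) (u i)"
      have q: "\<bar>q1 - q0\<bar> < t" unfolding q1_def q0_def using hd[OF elim(1) elim(2) nx] .
      have "\<bar>sqrt q1 - sqrt q0\<bar> \<le> 2 * sqrt \<bar>q1 - q0\<bar>" by (rule sqrt_diff_le)
      also have "\<dots> < 2 * sqrt t" using q by simp
      also have "2 * sqrt t = \<delta>1 * s" unfolding t_def using d1 s by simp
      finally have "\<bar>sqrt q1 - sqrt q0\<bar> < \<delta>1 * s" .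
      then have "\<bar>sqrt q1 / s - sqrt q0 / s\<bar> < \<delta>1"
        using s by (simp add: diff_divide_distrib[symmetric] abs_divide pos_divide_less_eq)
      then have "\<bar>Dn i - D i\<bar> < \<eta>" using d1(2) unfolding D_def Dn_def q1_def[symmetric] q0_def[symmetric] by blast
      moreover have "badf k (x i) (u i) \<ge> 0" by (simp add: badf_def)
      ultimately show ?thesis by linarith
    qed
    have sumb: "\<bar>(\<Sum>i<n. Dn i) - (\<Sum>i<n. D i)\<bar> \<le> (\<Sum>i<n. badf k (x i) (u i)) + real n * \<eta>"
    proof -
      have "\<bar>(\<Sum>i<n. Dn i) - (\<Sum>i<n. D i)\<bar> = \<bar>\<Sum>i<n. Dn i - D i\<bar>" by (simp add: sum_subtractf)
      also have "\<dots> \<le> (\<Sum>i<n. \<bar>Dn i - D i\<bar>)" by (rule sum_abs)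
      also have "\<dots> \<le> (\<Sum>i<n. badf k (x i) (u i) + \<eta>)" by (rule sum_mono) (rule tm)
      also have "\<dots> = (\<Sum>i<n. badf k (x i) (u i)) + real n * \<eta>" by (simp add: sum.distrib)
      finally show ?thesis .
    qed
    have nn: "real n > 0" using elim(5) by simp
    have avgb: "\<bar>(\<Sum>i<n. Dn i) / real n - (\<Sum>i<n. D i) / real n\<bar> \<le> (\<Sum>i<n. badf k (x i) (u i)) / real n + \<eta>"
    proof -
      have "\<bar>(\<Sum>i<n. Dn i) / real n - (\<Sum>i<n. D i) / real n\<bar> = \<bar>(\<Sum>i<n. Dn i) - (\<Sum>i<n. D i)\<bar> / real n"
        using nn by (simp add: diff_divide_distrib[symmetric] abs_divide)
      also have "\<dots> \<le> ((\<Sum>i<n. badf k (x i) (u i)) + real n * \<eta>) / real n"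
        using sumb nn by (simp add: divide_right_mono)
      also have "\<dots> = (\<Sum>i<n. badf k (x i) (u i)) / real n + \<eta>" using nn by (simp add: add_divide_distrib)
      finally show ?thesis .
    qed
    have gen: "\<And>A B C P. \<bar>A - B\<bar> \<le> C + \<eta> \<Longrightarrow> \<bar>C - P\<bar> < \<eta> \<Longrightarrow> \<bar>B - g\<bar> < \<eta> \<Longrightarrow> \<bar>P\<bar> < \<eta> \<Longrightarrow> \<bar>A - g\<bar> < e"
      unfolding \<eta>_def abs_le_iff abs_less_iff by linarith
    have "dist ((\<Sum>i<n. Dn i) / real n) g < e"
      unfolding dist_real_def by (rule gen[OF avgb elim(3) _ pk]) (use elim(4) in \<open>simp add: D_def\<close>)
    then show ?case unfolding Dn_def .
  qed
qed



lemma mscale_between: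
  assumes rho: "rho_function \<rho>" and n: "n > 0" and s: "0 < s1" "s1 < s2"
    and h1: "(\<Sum>i<n. \<rho> (v i / s1)) / real n > 1/2" and h2: "(\<Sum>i<n. \<rho> (v i / s2)) / real n < 1/2"
  shows "s1 < mscale \<rho> n v \<and> mscale \<rho> n v < s2"
proof -
  note P = rho_props[OF rho]
  have r0: "\<rho> 0 = 0" by (rule P(9))
  define h where "h s = (1 / real n) * (\<Sum>i<n. \<rho> (v i / s))" for s
  have nn: "real n > 0" using n by simp
  have hs1: "h s1 > 1/2" and hs2: "h s2 < 1/2" using h1 h2 by (simp_all add: h_def)
  define NZ where "NZ = {i\<in>{..<n}. v i \<noteq> 0}"
  define Z where "Z = {i\<in>{..<n}. v i = 0}"
  have finNZ: "finite NZ" unfolding NZ_def by simp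
  have cardeq: "real (card NZ) + real (card Z) = real n"
  proof -
    have "NZ \<union> Z = {..<n}" "NZ \<inter> Z = {}" unfolding NZ_def Z_def by auto
    moreover have "card (NZ \<union> Z) = card NZ + card Z"
      by (rule card_Un_disjoint) (auto simp: NZ_def Z_def)
    ultimately have "card NZ + card Z = n" by simp
    then show ?thesis by (metis of_nat_add)
  qed
  have sumNZ: "(\<Sum>i<n. \<rho> (v i / s)) = (\<Sum>i\<in>NZ. \<rho> (v i / s))" for s
    by (rule sum.mono_neutral_right) (auto simp: NZ_def r0)
  have sumle: "(\<Sum>i\<in>NZ. \<rho> (v i / s)) \<le> real (card NZ)" for s
    using sum_bounded_above[of NZ "\<lambda>i. \<rho> (v i / s)" 1] P(3) by simp
  have termmono: "\<rho> (v i / b) \<le> \<rho> (v i / a)" if "0 < a" "a \<le> b" for a b i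
  proof -
    have "\<bar>v i\<bar> / b \<le> \<bar>v i\<bar> / a" using that by (intro divide_left_mono) auto
    then have "\<rho> (\<bar>v i\<bar> / b) \<le> \<rho> (\<bar>v i\<bar> / a)" using that by (intro P(5)) auto
    moreover have "\<bar>v i / b\<bar> = \<bar>v i\<bar> / b" "\<bar>v i / a\<bar> = \<bar>v i\<bar> / a" using that by (simp_all add: abs_divide)
    ultimately show ?thesis using P(1)[of "v i / b"] P(1)[of "v i / a"] by metis
  qed
  have hmono: "h b \<le> h a" if "0 < a" "a \<le> b" for a b
    unfolding h_def using termmono[OF that] nn by (intro mult_left_mono sum_mono) auto
  have nzbig: "real n < 2 * real (card NZ)"
    using hs1 sumle[of s1] sumNZ[of s1] nn unfolding h_def by (simp add: field_simps)
  have notzero: "\<not> real n \<le> 2 * real (card Z)" using nzbig cardeq by linarith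
  have strict: "h b < h a" if ab: "0 < a" "a < b" and hb: "h b = 1/2" for a b
  proof -
    have "(\<Sum>i\<in>NZ. \<rho> (v i / b)) = real n / 2" using hb sumNZ[of b] nn unfolding h_def by (simp add: field_simps)
    then have "(\<Sum>i\<in>NZ. \<rho> (v i / b)) < real (card NZ)" using nzbig by linarith
    then obtain i where i: "i \<in> NZ" "\<rho> (v i / b) < 1"
    proof -
      assume *: "(\<Sum>i\<in>NZ. \<rho> (v i / b)) < real (card NZ)"
      show thesis
      proof (rule ccontr)
        assume "\<not> thesis"
        then have "\<forall>i\<in>NZ. 1 \<le> \<rho> (v i / b)" using that by force
        then have "real (card NZ) * 1 \<le> (\<Sum>i\<in>NZ. \<rho> (v i / b))" by (intro sum_bounded_below) auto
        then show False using * by simp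
      qed
    qed
    have vi: "v i \<noteq> 0" using i unfolding NZ_def by auto
    have "\<bar>v i\<bar> / b < \<bar>v i\<bar> / a" using ab vi by (intro divide_strict_left_mono) auto
    moreover have e1: "\<rho> (v i / b) = \<rho> (\<bar>v i\<bar> / b)" "\<rho> (v i / a) = \<rho> (\<bar>v i\<bar> / a)"
      using P(1)[of "v i / b"] P(1)[of "v i / a"] ab by (simp_all add: abs_divide)
    ultimately have "\<rho> (v i / b) < \<rho> (v i / a)" using i ab by (simp only: e1) (intro P(6), auto)
    then have "(\<Sum>i\<in>NZ. \<rho> (v i / b)) < (\<Sum>i\<in>NZ. \<rho> (v i / a))"
      using termmono[of a b] ab i(1) finNZ by (intro sum_strict_mono_ex1) auto
    then show ?thesis unfolding h_def sumNZ using nn by (simp add: field_simps)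
  qed
  have cont: "continuous_on {s1..s2} h"
  proof -
    have "continuous_on {s1..s2} (\<lambda>s. \<rho> (v i / s))" for i
      by (rule continuous_on_compose2[OF P(4) _ subset_UNIV]) (use s in \<open>auto intro!: continuous_intros\<close>)
    then show ?thesis unfolding h_def by (intro continuous_intros) auto
  qed
  obtain x0 where x0: "s1 \<le> x0" "x0 \<le> s2" "h x0 = 1/2"
    using IVT2'[of h s2 "1/2" s1, OF _ _ _ cont] hs1 hs2 s by auto
  have x1: "s1 < x0" using x0 hs1 by (cases "x0 = s1") auto
  have x2: "x0 < s2" using x0 hs2 by (cases "x0 = s2") auto
  have the: "(THE s. s > 0 \<and> (1 / real n) * (\<Sum>i<n. \<rho> (v i / s)) = 1/2) = x0"
  proof (rule the_equality)
    show "x0 > 0 \<and> (1 / real n) * (\<Sum>i<n. \<rho> (v i / x0)) = 1/2" using x0 x1 s unfolding h_def by simp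
  next
    fix y assume y: "y > 0 \<and> (1 / real n) * (\<Sum>i<n. \<rho> (v i / y)) = 1/2"
    then have hy: "h y = 1/2" "y > 0" unfolding h_def by auto
    show "y = x0"
    proof (rule ccontr)
      assume "y \<noteq> x0"
      then consider "y < x0" | "x0 < y" by linarith
      then show False
      proof cases
        case 1 then show ?thesis using strict[OF hy(2) 1 x0(3)] hy x0(3) by simp
      next
        case 2 then show ?thesis using strict[of x0 y] x1 s hy x0(3) by simp
      qed
    qed
  qed
  have "mscale \<rho> n v = x0"
  proof -
    have e1: "mscale \<rho> n v = (if real n \<le> 2 * real (card Z) then 0
      else (THE s. s > 0 \<and> (1 / real n) * (\<Sum>i<n. \<rho> (v i / s)) = 1/2))"
      unfolding mscale_def Z_def by (rule refl)
    also have "\<dots> = (THE s. s > 0 \<and> (1 / real n) * (\<Sum>i<n. \<rho> (v i / s)) = 1/2)"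
      by (rule if_not_P[OF notzero])
    also have "\<dots> = x0" by (rule the)
    finally show ?thesis .
  qed
  then show ?thesis using x1 x2 by simp
qed

lemma mscale_lim:
  assumes rho: "rho_function \<rho>" and sig: "\<sigma>0 > 0"
    and H: "\<And>m::nat. \<exists>c1 c2. c1 > 1/2 \<and> c2 < 1/2 \<and>
       (\<lambda>n. (\<Sum>i<n. \<rho> (v n i / (\<sigma>0 - \<sigma>0 / (real m + 2)))) / real n) \<longlonglongrightarrow> c1 \<and>
       (\<lambda>n. (\<Sum>i<n. \<rho> (v n i / (\<sigma>0 + \<sigma>0 / (real m + 2)))) / real n) \<longlonglongrightarrow> c2"
  shows "(\<lambda>n. mscale \<rho> n (v n)) \<longlonglongrightarrow> \<sigma>0"
proof (rule tendstoI)
  fix e :: real assume e: "e > 0"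
  obtain m :: nat where m: "\<sigma>0 / e < real m" using reals_Archimedean2 by blast
  define t where "t = \<sigma>0 / (real m + 2)"
  have te: "t < e"
  proof -
    have "\<sigma>0 < e * real m" using m e by (simp add: field_simps)
    also have "\<dots> \<le> e * (real m + 2)" using e by simp
    finally show ?thesis unfolding t_def using e by (simp add: field_simps)
  qed
  have mp: "real m + 2 > 1" by simp
  have t00: "0 < t" unfolding t_def using sig by simp
  have "\<sigma>0 * 1 < \<sigma>0 * (real m + 2)" using sig mp by (intro mult_strict_left_mono) auto
  then have "t < \<sigma>0" unfolding t_def using pos_divide_less_eq[of "real m + 2" \<sigma>0 \<sigma>0] by simp
  note t0 = t00 this
  obtain c1 c2 where c: "c1 > 1/2" "c2 < 1/2"
    and l1: "(\<lambda>n. (\<Sum>i<n. \<rho> (v n i / (\<sigma>0 - t))) / real n) \<longlonglongrightarrow> c1"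
    and l2: "(\<lambda>n. (\<Sum>i<n. \<rho> (v n i / (\<sigma>0 + t))) / real n) \<longlonglongrightarrow> c2"
    using H[of m] unfolding t_def by blast
  have ev1: "eventually (\<lambda>n. (\<Sum>i<n. \<rho> (v n i / (\<sigma>0 - t))) / real n > 1/2) sequentially"
    using order_tendstoD(1)[OF l1 c(1)] .
  have ev2: "eventually (\<lambda>n. (\<Sum>i<n. \<rho> (v n i / (\<sigma>0 + t))) / real n < 1/2) sequentially"
    using order_tendstoD(2)[OF l2 c(2)] .
  show "eventually (\<lambda>n. dist (mscale \<rho> n (v n)) \<sigma>0 < e) sequentially"
    using ev1 ev2 eventually_gt_at_top[of 0]
  proof eventually_elim
    case (elim n)
    have "\<sigma>0 - t < mscale \<rho> n (v n) \<and> mscale \<rho> n (v n) < \<sigma>0 + t"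
      by (rule mscale_between[OF rho elim(3) _ _ elim(1) elim(2)]) (use t0 in auto)
    then have "\<bar>mscale \<rho> n (v n) - \<sigma>0\<bar> < e" using te unfolding abs_less_iff by linarith
    then show ?case by (simp only: dist_real_def)
  qed
qed



lemma rho_antitone:
  assumes rho: "rho_function \<rho>" and "0 < a" "a \<le> b"
  shows "\<rho> (v / b) \<le> \<rho> (v / a)"
proof -
  note P = rho_props[OF rho]
  have "\<bar>v\<bar> / b \<le> \<bar>v\<bar> / a" using assms by (intro divide_left_mono) auto
  then have "\<rho> (\<bar>v\<bar> / b) \<le> \<rho> (\<bar>v\<bar> / a)" using assms by (intro P(5)) auto
  moreover have "\<bar>v / b\<bar> = \<bar>v\<bar> / b" "\<bar>v / a\<bar> = \<bar>v\<bar> / a" using assms by (simp_all add: abs_divide)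
  ultimately show ?thesis using P(1)[of "v / b"] P(1)[of "v / a"] by metis
qed

lemma resid:
  fixes B0 B :: "real^'q^'p" and x :: "real^'p" and u :: "real^'q"
  shows "transpose B0 *v x + u - transpose B *v x = u + transpose (B0 - B) *v x"
  by (simp add: vec_eq_iff vector_matrix_mult_def sum_subtractf algebra_simps)

lemma cont_qf: "continuous_on UNIV (\<lambda>w. qf M w)"
proof -
  have "continuous_on UNIV (\<lambda>w. M *v w)" by (rule matrix_vector_mult_linear_continuous_on)
  then show ?thesis unfolding qf_def by (intro continuous_intros)
qed

lemma pd_invertible:
  assumes "pd_sym (S :: real^'q^'q)"
  shows "invertible S"
proof -
  have "\<forall>v. S *v v = 0 \<longrightarrow> v = 0"
  proof (intro allI impI)
    fix v assume "S *v v = 0"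
    then show "v = 0" using assms unfolding pd_sym_def by (metis inner_zero_right less_irrefl)
  qed
  then show ?thesis unfolding invertible_left_inverse matrix_left_invertible_ker .
qed


theorem lemma6:
  fixes M :: "'a measure"
    and X :: "nat \<Rightarrow> 'a \<Rightarrow> real^'p"
    and U :: "nat \<Rightarrow> 'a \<Rightarrow> real^'q"
    and Y :: "nat \<Rightarrow> 'a \<Rightarrow> real^'q"
    and B0 :: "real^'q^'p"
    and \<Sigma>0 \<Gamma>0 :: "real^'q^'q"
    and F0 :: "(real^'q) measure"
    and \<rho>0 :: "real \<Rightarrow> real"
    and Bt :: "nat \<Rightarrow> 'a \<Rightarrow> real^'q^'p"
    and St :: "nat \<Rightarrow> 'a \<Rightarrow> real^'q^'q"
    and \<sigma>0 :: real
  assumes "prob_space M"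
    and rv_X: "\<And>i. X i \<in> borel_measurable M"
    and rv_U: "\<And>i. U i \<in> borel_measurable M"
    and iid_indep: "prob_space.indep_vars M (\<lambda>_. borel) (\<lambda>i \<omega>. (X i \<omega>, U i \<omega>)) UNIV"
    and iid_dist: "\<And>i. distr M borel (\<lambda>\<omega>. (X i \<omega>, U i \<omega>)) = distr M borel (\<lambda>\<omega>. (X 0 \<omega>, U 0 \<omega>))"
    and indep_XU: "\<And>i. distr M borel (\<lambda>\<omega>. (X i \<omega>, U i \<omega>)) = distr M borel (X i) \<Otimes>\<^sub>M distr M borel (U i)"
    and model: "\<And>i \<omega>. \<omega> \<in> space M \<Longrightarrow> Y i \<omega> = transpose B0 *v X i \<omega> + U i \<omega>"
    and F0: "\<And>i. distr M borel (U i) = F0"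
    and scatter: "pd_sym \<Sigma>0"
    and Gamma0: "\<Gamma>0 = (1 / (det \<Sigma>0 powr (1 / real CARD('q)))) *\<^sub>R \<Sigma>0"
    and rho: "rho_function \<rho>0"
    and init_B: "AE \<omega> in M. (\<lambda>n. Bt n \<omega>) \<longlonglongrightarrow> B0"
    and init_S: "AE \<omega> in M. (\<lambda>n. St n \<omega>) \<longlonglongrightarrow> \<Gamma>0"
    and sigma0_pos: "\<sigma>0 > 0"
    and sigma0_eq: "(\<integral>u. \<rho>0 (sqrt (u \<bullet> (matrix_inv \<Gamma>0 *v u)) / \<sigma>0) \<partial>F0) = 1/2"
    and sigma0_unique: "\<And>\<sigma>. \<sigma> > 0 \<Longrightarrow>
           (\<integral>u. \<rho>0 (sqrt (u \<bullet> (matrix_inv \<Gamma>0 *v u)) / \<sigma>) \<partial>F0) = 1/2 \<Longrightarrow> \<sigma> = \<sigma>0"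
  shows "AE \<omega> in M.
           (\<lambda>n. mscale \<rho>0 n (\<lambda>i. mdist (Bt n \<omega>) (St n \<omega>) (Y i \<omega>) (X i \<omega>))) \<longlonglongrightarrow> \<sigma>0"
proof -
  interpret P: prob_space M by fact
  note P = rho_props[OF rho]
  note rv_X[measurable] rv_U[measurable]
  define W where "W i \<omega> = (X i \<omega>, U i \<omega>)" for i \<omega>
  have W_meas[measurable]: "W i \<in> borel_measurable M" for i unfolding W_def by measurable
  have indW: "P.indep_vars (\<lambda>_. borel) W UNIV" using iid_indep unfolding W_def[abs_def] .
  have distW: "distr M borel (W i) = distr M borel (W 0)" for i using iid_dist[of i] unfolding W_def[abs_def] by simp
  have slln: "AE \<omega> in M. (\<lambda>n. (\<Sum>i<n. h (W i \<omega>)) / real n) \<longlonglongrightarrow> P.expectation (\<lambda>\<omega>. h (W 0 \<omega>))"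
    if hm[measurable]: "h \<in> borel_measurable borel" and hb: "\<And>z. h z \<in> {0..1}" for h :: "(real^'p) \<times> (real^'q) \<Rightarrow> real"
  proof -
    have ind: "P.indep_vars (\<lambda>_. borel) (\<lambda>i \<omega>. h (W i \<omega>)) UNIV"
      by (rule P.indep_vars_compose2[OF indW]) simp
    have dist: "distr M borel (\<lambda>\<omega>. h (W i \<omega>)) = distr M borel (\<lambda>\<omega>. h (W 0 \<omega>))" for i
    proof -
      have "distr M borel (\<lambda>\<omega>. h (W i \<omega>)) = distr (distr M borel (W i)) borel h" for i
        by (subst distr_distr) (auto simp: comp_def)
      then show ?thesis using distW[of i] by metis
    qed
    show ?thesis using slln01[OF assms(1) ind dist] hb by simp
  qed
  have invS: "invertible \<Sigma>0" by (rule pd_invertible[OF scatter])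
  then have "det \<Sigma>0 \<noteq> 0" by (simp add: invertible_det_nz)
  then have "1 / (det \<Sigma>0 powr (1 / real CARD('q))) \<noteq> 0" by simp
  then have invG: "invertible \<Gamma>0" unfolding Gamma0 by (rule scalar_invertible[OF _ invS])
  define M0 where "M0 = matrix_inv \<Gamma>0"
  define g where "g s = (\<integral>u. \<rho>0 (sqrt (qf M0 u) / s) \<partial>F0)" for s
  have F0': "F0 = distr M borel (U 0)" using F0[of 0] by simp
  interpret F: prob_space F0 unfolding F0' by (rule P.prob_space_distr) simp
  have contr: "continuous_on UNIV (\<lambda>u. \<rho>0 (sqrt (qf M0 u) / s))" for s
    by (rule continuous_on_compose2[OF P(4) _ subset_UNIV]) (unfold divide_inverse, intro continuous_intros cont_qf)
  have measr[measurable]: "(\<lambda>u. \<rho>0 (sqrt (qf M0 u) / s)) \<in> borel_measurable borel" for s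
    by (rule borel_measurable_continuous_onI[OF contr])
  have intg: "integrable F0 (\<lambda>u. \<rho>0 (sqrt (qf M0 u) / s))" for s
  proof (rule F.integrable_const_bound[where B=1])
    show "AE x in F0. norm (\<rho>0 (sqrt (qf M0 x) / s)) \<le> 1" using P(2,3) by auto
    show "(\<lambda>u. \<rho>0 (sqrt (qf M0 u) / s)) \<in> borel_measurable F0" unfolding F0' by simp
  qed
  have gmono: "g b \<le> g a" if "0 < a" "a \<le> b" for a b
    unfolding g_def by (intro integral_mono intg rho_antitone[OF rho that])
  have g0: "g \<sigma>0 = 1/2" using sigma0_eq unfolding g_def qf_def M0_def .
  have guniq: "s = \<sigma>0" if "s > 0" "g s = 1/2" for s
    using sigma0_unique[OF that(1)] that(2) unfolding g_def qf_def M0_def by simp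
  have gless: "g (\<sigma>0 + t) < 1/2" if "0 < t" for t
  proof -
    have "g (\<sigma>0 + t) \<le> 1/2" using gmono[of \<sigma>0 "\<sigma>0 + t"] g0 sigma0_pos that by simp
    moreover have "g (\<sigma>0 + t) \<noteq> 1/2" using guniq[of "\<sigma>0 + t"] sigma0_pos that by auto
    ultimately show ?thesis by simp
  qed
  have gmore: "g (\<sigma>0 - t) > 1/2" if "0 < t" "t < \<sigma>0" for t
  proof -
    have "g (\<sigma>0 - t) \<ge> 1/2" using gmono[of "\<sigma>0 - t" \<sigma>0] g0 that by simp
    moreover have "g (\<sigma>0 - t) \<noteq> 1/2" using guniq[of "\<sigma>0 - t"] that by auto
    ultimately show ?thesis by simp
  qed
  have A: "AE \<omega> in M. (\<lambda>n. (\<Sum>i<n. \<rho>0 (sqrt (qf M0 (U i \<omega>)) / s)) / real n) \<longlonglongrightarrow> g s" for s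
  proof -
    have hm: "(\<lambda>z. \<rho>0 (sqrt (qf M0 (snd z)) / s)) \<in> borel_measurable (borel :: ((real^'p) \<times> (real^'q)) measure)"
      by (rule borel_measurable_continuous_onI, rule continuous_on_compose2[OF contr[of s] continuous_on_snd]) auto
    have e: "P.expectation (\<lambda>\<omega>. \<rho>0 (sqrt (qf M0 (snd (W 0 \<omega>))) / s)) = g s"
      unfolding g_def F0' W_def snd_conv by (rule integral_distr[symmetric]) auto
    show ?thesis using slln[OF hm] P(2,3) unfolding e by (simp add: W_def)
  qed
  define p where "p k = P.expectation (\<lambda>\<omega>. badf k (X 0 \<omega>) (U 0 \<omega>))" for k
  have badm[measurable]: "(\<lambda>z. badf k (fst z) (snd z)) \<in> borel_measurable (borel :: ((real^'p) \<times> (real^'q)) measure)" for k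
  proof -
    have f1[measurable]: "(\<lambda>z::(real^'p) \<times> (real^'q). norm (fst z)) \<in> borel_measurable borel"
      by (intro borel_measurable_continuous_onI continuous_intros)
    have f2[measurable]: "(\<lambda>z::(real^'p) \<times> (real^'q). norm (snd z)) \<in> borel_measurable borel"
      by (intro borel_measurable_continuous_onI continuous_intros)
    show ?thesis unfolding badf_def by measurable
  qed
  have Bd: "AE \<omega> in M. (\<lambda>n. (\<Sum>i<n. badf k (X i \<omega>) (U i \<omega>)) / real n) \<longlonglongrightarrow> p k" for k
  proof -
    have "\<And>z. badf k (fst z) (snd z) \<in> {0..1}" by (simp add: badf_def)
    from slln[OF badm this] show ?thesis by (simp add: W_def p_def)
  qed
  have p0: "p \<longlonglongrightarrow> 0"
  proof -
    have "(\<lambda>k. P.expectation (\<lambda>\<omega>. badf k (X 0 \<omega>) (U 0 \<omega>))) \<longlonglongrightarrow> P.expectation (\<lambda>\<omega>. 0)"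
    proof (rule integral_dominated_convergence[where w="\<lambda>_. 1"])
      show "(\<lambda>\<omega>. 0::real) \<in> borel_measurable M" by simp
      show "(\<lambda>\<omega>. badf k (X 0 \<omega>) (U 0 \<omega>)) \<in> borel_measurable M" for k
        using measurable_comp[OF W_meas[of 0] badm[of k]] by (simp add: comp_def W_def)
      show "integrable M (\<lambda>_. 1::real)" by simp
      show "AE \<omega> in M. norm (badf k (X 0 \<omega>) (U 0 \<omega>)) \<le> 1" for k by (simp add: badf_def)
      show "AE \<omega> in M. (\<lambda>k. badf k (X 0 \<omega>) (U 0 \<omega>)) \<longlonglongrightarrow> 0"
      proof (intro AE_I2 tendsto_eventually)
        fix \<omega>
        obtain N :: nat where N: "max (norm (X 0 \<omega>)) (norm (U 0 \<omega>)) < real N" using reals_Archimedean2 by blast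
        show "eventually (\<lambda>k. badf k (X 0 \<omega>) (U 0 \<omega>) = 0) sequentially"
          unfolding eventually_sequentially
        proof (intro exI allI impI)
          fix k assume "N \<le> k"
          then have "real N \<le> real k" by simp
          then show "badf k (X 0 \<omega>) (U 0 \<omega>) = 0" using N by (simp add: badf_def)
        qed
      qed
    qed
    then show ?thesis unfolding p_def[abs_def] by simp
  qed
  define s1 where "s1 m = \<sigma>0 - \<sigma>0 / (real m + 2)" for m :: nat
  define s2 where "s2 m = \<sigma>0 + \<sigma>0 / (real m + 2)" for m :: nat
  have AE_all: "AE \<omega> in M. (\<forall>m. (\<lambda>n. (\<Sum>i<n. \<rho>0 (sqrt (qf M0 (U i \<omega>)) / s1 m)) / real n) \<longlonglongrightarrow> g (s1 m))
      \<and> (\<forall>m. (\<lambda>n. (\<Sum>i<n. \<rho>0 (sqrt (qf M0 (U i \<omega>)) / s2 m)) / real n) \<longlonglongrightarrow> g (s2 m))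
      \<and> (\<forall>k. (\<lambda>n. (\<Sum>i<n. badf k (X i \<omega>) (U i \<omega>)) / real n) \<longlonglongrightarrow> p k)
      \<and> (\<lambda>n. Bt n \<omega>) \<longlonglongrightarrow> B0 \<and> (\<lambda>n. St n \<omega>) \<longlonglongrightarrow> \<Gamma>0"
  proof -
    have a1: "AE \<omega> in M. \<forall>m. (\<lambda>n. (\<Sum>i<n. \<rho>0 (sqrt (qf M0 (U i \<omega>)) / s1 m)) / real n) \<longlonglongrightarrow> g (s1 m)"
      unfolding AE_all_countable using A by blast
    have a2: "AE \<omega> in M. \<forall>m. (\<lambda>n. (\<Sum>i<n. \<rho>0 (sqrt (qf M0 (U i \<omega>)) / s2 m)) / real n) \<longlonglongrightarrow> g (s2 m)"
      unfolding AE_all_countable using A by blast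
    have a3: "AE \<omega> in M. \<forall>k. (\<lambda>n. (\<Sum>i<n. badf k (X i \<omega>) (U i \<omega>)) / real n) \<longlonglongrightarrow> p k"
      unfolding AE_all_countable using Bd by blast
    show ?thesis by (intro AE_conjI a1 a2 a3 init_B init_S)
  qed
  have det: "(\<lambda>n. mscale \<rho>0 n (\<lambda>i. mdist (Bt n \<omega>) (St n \<omega>) (Y i \<omega>) (X i \<omega>))) \<longlonglongrightarrow> \<sigma>0"
    if H1: "\<And>m. (\<lambda>n. (\<Sum>i<n. \<rho>0 (sqrt (qf M0 (U i \<omega>)) / s1 m)) / real n) \<longlonglongrightarrow> g (s1 m)"
      and H2: "\<And>m. (\<lambda>n. (\<Sum>i<n. \<rho>0 (sqrt (qf M0 (U i \<omega>)) / s2 m)) / real n) \<longlonglongrightarrow> g (s2 m)"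
      and H3: "\<And>k. (\<lambda>n. (\<Sum>i<n. badf k (X i \<omega>) (U i \<omega>)) / real n) \<longlonglongrightarrow> p k"
      and HB: "(\<lambda>n. Bt n \<omega>) \<longlonglongrightarrow> B0" and HS: "(\<lambda>n. St n \<omega>) \<longlonglongrightarrow> \<Gamma>0" and sp: "\<omega> \<in> space M"
    for \<omega>
  proof -
    define v where "v n i = mdist (Bt n \<omega>) (St n \<omega>) (Y i \<omega>) (X i \<omega>)" for n i
    have veq: "v n i = sqrt (qf (matrix_inv (St n \<omega>)) (U i \<omega> + transpose (B0 - Bt n \<omega>) *v X i \<omega>))" for n i
      unfolding v_def mdist_def qf_def model[OF sp] resid ..
    have conv: "(\<lambda>n. (\<Sum>i<n. \<rho>0 (v n i / s)) / real n) \<longlonglongrightarrow> g s"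
      if s: "s > 0" and cA: "(\<lambda>n. (\<Sum>i<n. \<rho>0 (sqrt (qf M0 (U i \<omega>)) / s)) / real n) \<longlonglongrightarrow> g s" for s
      unfolding veq using det_conv[OF invG rho s HB HS cA[unfolded M0_def] H3 p0] .
    have pos: "\<sigma>0 / (real m + 2) > 0" "\<sigma>0 / (real m + 2) < \<sigma>0" for m :: nat
    proof -
      show "\<sigma>0 / (real m + 2) > 0" using sigma0_pos by simp
      have "\<sigma>0 * 1 < \<sigma>0 * (real m + 2)" using sigma0_pos by (intro mult_strict_left_mono) auto
      then show "\<sigma>0 / (real m + 2) < \<sigma>0" using pos_divide_less_eq[of "real m + 2" \<sigma>0 \<sigma>0] by simp
    qed
    have "(\<lambda>n. mscale \<rho>0 n (v n)) \<longlonglongrightarrow> \<sigma>0"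
    proof (rule mscale_lim[OF rho sigma0_pos])
      fix m :: nat
      have s1p: "s1 m > 0" using pos[of m] unfolding s1_def by linarith
      have s2p: "s2 m > 0" using pos[of m] sigma0_pos unfolding s2_def by linarith
      show "\<exists>c1 c2. c1 > 1/2 \<and> c2 < 1/2 \<and>
       (\<lambda>n. (\<Sum>i<n. \<rho>0 (v n i / (\<sigma>0 - \<sigma>0 / (real m + 2)))) / real n) \<longlonglongrightarrow> c1 \<and>
       (\<lambda>n. (\<Sum>i<n. \<rho>0 (v n i / (\<sigma>0 + \<sigma>0 / (real m + 2)))) / real n) \<longlonglongrightarrow> c2"
      proof (intro exI conjI)
        show "g (s1 m) > 1/2" unfolding s1_def using gmore pos by blast
        show "g (s2 m) < 1/2" unfolding s2_def using gless pos by blast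
        show "(\<lambda>n. (\<Sum>i<n. \<rho>0 (v n i / (\<sigma>0 - \<sigma>0 / (real m + 2)))) / real n) \<longlonglongrightarrow> g (s1 m)"
          using conv[OF s1p H1[of m]] unfolding s1_def .
        show "(\<lambda>n. (\<Sum>i<n. \<rho>0 (v n i / (\<sigma>0 + \<sigma>0 / (real m + 2)))) / real n) \<longlonglongrightarrow> g (s2 m)"
          using conv[OF s2p H2[of m]] unfolding s2_def .
      qed
    qed
    then show "(\<lambda>n. mscale \<rho>0 n (\<lambda>i. mdist (Bt n \<omega>) (St n \<omega>) (Y i \<omega>) (X i \<omega>))) \<longlonglongrightarrow> \<sigma>0"
      unfolding v_def .
  qed
  show ?thesis
    using AE_all AE_space
  proof eventually_elim
    case (elim \<omega>)
    then show ?case by (intro det) blast+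
  qed
qed

end
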